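(* Let $(X,d)$, $(\Lambda,d_\Lambda)$ be compact metric spaces, $\tau:\Lambda\times X\to X$ continuous and $q:X\to\mathcal P(\Lambda)$ continuous. Assume: (W1) each $\tau_\lambda$ is $1$-Lipschitz on $X$; (CP1) there are an integer $M\ge1$ and $0<s<1$ such that $\tau_{\lambda^M}$ is $s$-Lipschitz on $X$ for every $\lambda^M\in\Lambda^M$; (H2) there is $r\ge0$ with $d(\tau(\lambda_1,x),\tau(\lambda_2,x))\le r\,d_\Lambda(\lambda_1,\lambda_2)$ for all $\lambda_1,\lambda_2$, $x$; (H3) there is $t\ge0$ with $d_{MK}(q_x,q_y)\le t\,d(x,y)$ for all $x,y\in X$; (H4) $q_x(A)>0$ for every nonempty open $A\subseteq\Lambda$ and every $x\in X$; and suppose $s+r\,M\,t<1$. Let $A_{\mathcal R}$ be the unique nonempty compact set with $F_{\mathcal R}(A_{\mathcal R})=A_{\mathcal R}$ and $\mu_{\mathcal R}$ the unique probability with $T_q(\mu_{\mathcal R})=\mu_{\mathcal R}$. Then $\operatorname{supp}(\mu_{\mathcal R})=A_{\mathcal R}$.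
   Context: $\mathcal{P}(Y)$ is the set of Borel probability measures on a compact metric space $Y$, with $d_{MK}(\mu,\nu)=\sup_{f\in \mathrm{Lip}_1(Y)}\{\int f\,d\mu-\int f\,d\nu\}$. $\tau_\lambda(x)=\tau(\lambda,x)$; for $\lambda^j=(\lambda_0,\dots,\lambda_{j-1})$, $\tau_{\lambda^j}=\tau_{\lambda_{j-1}}\circ\cdots\circ\tau_{\lambda_0}$. $F_{\mathcal R}(B)=\bigcup_{\lambda\in\Lambda}\tau_\lambda(B)$ on nonempty compact subsets $B$ of $X$. The Markov operator $T_q$ on $\mathcal P(X)$ is defined by $\int_X f\,dT_q(\mu)=\int_X\int_\Lambda f(\tau(\lambda,x))\,dq_x(\lambda)\,d\mu(x)$ for $f\in C(X)$. *)

theory Defs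
  imports "HOL-Probability.Probability"
begin

definition borel_prob_on :: "'a::metric_space set \<Rightarrow> 'a measure \<Rightarrow> bool" where
  "borel_prob_on Y \<mu> \<longleftrightarrow> prob_space \<mu> \<and> sets \<mu> = sets (restrict_space borel Y)"

definition dMK :: "'a::metric_space set \<Rightarrow> 'a measure \<Rightarrow> 'a measure \<Rightarrow> real" where
  "dMK Y \<mu> \<nu> = Sup {(\<integral>y. f y \<partial>\<mu>) - (\<integral>y. f y \<partial>\<nu>) | f. lipschitz_on 1 Y f}"

fun tau_seq :: "('l \<Rightarrow> 'a \<Rightarrow> 'a) \<Rightarrow> 'l list \<Rightarrow> 'a \<Rightarrow> 'a" where
  "tau_seq \<tau> [] x = x"
| "tau_seq \<tau> (l # ls) x = tau_seq \<tau> ls (\<tau> l x)"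

definition F_R :: "'l set \<Rightarrow> ('l \<Rightarrow> 'a \<Rightarrow> 'a) \<Rightarrow> 'a set \<Rightarrow> 'a set" where
  "F_R L \<tau> B = (\<Union>l\<in>L. \<tau> l ` B)"

text \<open>mu is a fixed point of the Markov operator T_q (tested on C(X)).\<close>
definition Tq_fixed :: "'a::metric_space set \<Rightarrow> ('l \<Rightarrow> 'a \<Rightarrow> 'a) \<Rightarrow> ('a \<Rightarrow> 'l measure)
     \<Rightarrow> 'a measure \<Rightarrow> bool" where
  "Tq_fixed X \<tau> q \<mu> \<longleftrightarrow> (\<forall>f::'a \<Rightarrow> real. continuous_on X f \<longrightarrow>
      (\<integral>x. f x \<partial>\<mu>) = (\<integral>x. (\<integral>l. f (\<tau> l x) \<partial>(q x)) \<partial>\<mu>))"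

definition supp_on :: "'a::metric_space set \<Rightarrow> 'a measure \<Rightarrow> 'a set" where
  "supp_on X \<mu> = {x \<in> X. \<forall>e>0. measure \<mu> (ball x e \<inter> X) > 0}"

end

theory Submission
  imports Defs
begin

lemma bp_space: "borel_prob_on Y \<nu> \<Longrightarrow> space \<nu> = Y"
  unfolding borel_prob_on_def
proof -
  assume "prob_space \<nu> \<and> sets \<nu> = sets (restrict_space borel Y)"
  then have "space \<nu> = space (restrict_space borel Y)" by (intro sets_eq_imp_space_eq) simp
  then show ?thesis by (simp add: space_restrict_space)
qed

lemma bp_meas:
  assumes "borel_prob_on Y \<nu>" "continuous_on Y (f::_\<Rightarrow>real)"
  shows "f \<in> borel_measurable \<nu>"
proof -
  have "f \<in> borel_measurable (restrict_space borel Y)"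
    using assms(2) by (rule borel_measurable_continuous_on_restrict)
  moreover have "sets \<nu> = sets (restrict_space borel Y)" using assms(1) by (simp add: borel_prob_on_def)
  ultimately show ?thesis using measurable_cong_sets by blast
qed

lemma bp_int:
  assumes "compact Y" "borel_prob_on Y \<nu>" "continuous_on Y (f::_\<Rightarrow>real)"
  shows "integrable \<nu> f"
proof -
  interpret prob_space \<nu> using assms(2) by (simp add: borel_prob_on_def)
  have "bounded (f ` Y)" using assms by (intro compact_imp_bounded compact_continuous_image)
  then obtain B where B: "\<And>y. y \<in> Y \<Longrightarrow> norm (f y) \<le> B" unfolding bounded_iff by auto
  show ?thesis
    apply (rule integrable_const_bound[where B=B])
    using B bp_space[OF assms(2)] apply auto[1]
    using bp_meas[OF assms(2,3)] .
qed

lemma bp_sets: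
  assumes "borel_prob_on Y \<nu>" "continuous_on Y (f::_\<Rightarrow>real)"
  shows "{y\<in>Y. f y > 0} \<in> sets \<nu>"
proof -
  have [measurable]: "f \<in> borel_measurable \<nu>" using bp_meas[OF assms] .
  have "{y\<in>space \<nu>. f y > 0} \<in> sets \<nu>" by measurable
  then show ?thesis using bp_space[OF assms(1)] by simp
qed

lemma bp_pos:
  assumes "compact Y" "borel_prob_on Y \<nu>" "continuous_on Y (f::_\<Rightarrow>real)"
    "\<And>y. y \<in> Y \<Longrightarrow> f y \<ge> 0" "(\<integral>y. f y \<partial>\<nu>) = 0"
  shows "measure \<nu> {y\<in>Y. f y > 0} = 0"
proof -
  have sp: "space \<nu> = Y" using bp_space[OF assms(2)] .
  have int: "integrable \<nu> f" using bp_int[OF assms(1-3)] .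
  have "AE y in \<nu>. f y = 0"
    using integral_nonneg_eq_0_iff_AE[OF int] assms(4,5) sp AE_I2[of \<nu> "\<lambda>y. 0 \<le> f y"] by simp
  then have "AE y in \<nu>. \<not> f y > 0" by (rule eventually_mono) simp
  then have "emeasure \<nu> {y\<in>Y. f y > 0} = 0"
    using AE_iff_measurable[OF bp_sets[OF assms(2,3)], of "\<lambda>y. \<not> f y > 0"] sp by auto
  then show ?thesis by (simp add: measure_def)
qed

lemma tau_seq_append: "tau_seq \<tau> (xs @ ys) x = tau_seq \<tau> ys (tau_seq \<tau> xs x)"
  by (induction xs arbitrary: x) auto

lemma tau_seq_maps:
  assumes "\<And>l x. l \<in> L \<Longrightarrow> x \<in> X \<Longrightarrow> \<tau> l x \<in> X"
  shows "set ls \<subseteq> L \<Longrightarrow> x \<in> X \<Longrightarrow> tau_seq \<tau> ls x \<in> X"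
  using assms by (induction ls arbitrary: x) auto

lemma tau_seq_lip1:
  assumes "\<And>l x. l \<in> L \<Longrightarrow> x \<in> X \<Longrightarrow> \<tau> l x \<in> X"
    "\<And>l. l \<in> L \<Longrightarrow> lipschitz_on 1 X (\<tau> l)"
  shows "set ls \<subseteq> L \<Longrightarrow> x \<in> X \<Longrightarrow> y \<in> X \<Longrightarrow>
     dist (tau_seq \<tau> ls x) (tau_seq \<tau> ls y) \<le> dist x y"
proof (induction ls arbitrary: x y)
  case Nil then show ?case by simp
next
  case (Cons l ls)
  have "dist (\<tau> l x) (\<tau> l y) \<le> dist x y"
    using assms(2)[of l] Cons.prems by (auto dest: lipschitz_onD)
  moreover have "dist (tau_seq \<tau> ls (\<tau> l x)) (tau_seq \<tau> ls (\<tau> l y)) \<le> dist (\<tau> l x) (\<tau> l y)"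
    using Cons.IH[of "\<tau> l x" "\<tau> l y"] Cons.prems assms(1) by simp
  ultimately show ?case by simp
qed


lemma infdist_ge:
  assumes "A \<noteq> {}" "\<And>a. a \<in> A \<Longrightarrow> c \<le> dist x a"
  shows "c \<le> infdist x A"
  using assms unfolding infdist_def by (auto intro: cINF_greatest)

lemma part1:
  fixes X :: "'a::metric_space set" and L :: "'l::metric_space set"
    and \<tau> :: "'l \<Rightarrow> 'a \<Rightarrow> 'a" and q :: "'a \<Rightarrow> 'l measure"
    and M :: nat and s :: real
    and A :: "'a set" and \<mu> :: "'a measure"
  assumes X_cpt: "compact X" "X \<noteq> {}"
    and L_cpt: "compact L" "L \<noteq> {}"
    and tau_maps: "\<And>l x. l \<in> L \<Longrightarrow> x \<in> X \<Longrightarrow> \<tau> l x \<in> X"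
    and tau_cont: "continuous_on (L \<times> X) (\<lambda>(l, x). \<tau> l x)"
    and q_prob: "\<And>x. x \<in> X \<Longrightarrow> borel_prob_on L (q x)"
    and W1: "\<And>l. l \<in> L \<Longrightarrow> lipschitz_on 1 X (\<tau> l)"
    and CP1: "M \<ge> 1" "0 < s" "s < 1"
      "\<And>ls. set ls \<subseteq> L \<Longrightarrow> length ls = M \<Longrightarrow> lipschitz_on s X (tau_seq \<tau> ls)"
    and A_attr: "compact A" "A \<noteq> {}" "A \<subseteq> X" "F_R L \<tau> A = A"
    and mu_inv: "borel_prob_on X \<mu>" "Tq_fixed X \<tau> q \<mu>"
  shows "measure \<mu> {x\<in>X. infdist x A > 0} = 0"
proof -
  have sp: "space \<mu> = X" using bp_space[OF mu_inv(1)] .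
  interpret prob_space \<mu> using mu_inv(1) by (simp add: borel_prob_on_def)
  have tauA: "\<tau> l a \<in> A" if "l \<in> L" "a \<in> A" for l a
    using A_attr(4) that unfolding F_R_def by blast
  have tcl: "continuous_on L (\<lambda>l. \<tau> l x)" if "x \<in> X" for x
  proof -
    have c1: "continuous_on L (\<lambda>l. (l, x))" by (intro continuous_intros)
    have c2: "(\<lambda>l. (l, x)) ` L \<subseteq> L \<times> X" using that by auto
    show ?thesis using continuous_on_compose2[OF tau_cont c1 c2] by simp
  qed
  define D where "D = diameter X"
  have bX: "bounded X" using X_cpt(1) by (rule compact_imp_bounded)
  obtain a0 where a0: "a0 \<in> A" using A_attr(2) by blast
  define IDX where "IDX k = {ls. set ls \<subseteq> L \<and> length ls = k}" for k
  obtain l0 where l0: "l0 \<in> L" using L_cpt(2) by blast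
  have IDXne: "IDX k \<noteq> {}" for k
    unfolding IDX_def using l0 by (auto intro!: exI[of _ "replicate k l0"])
  define f where "f k x = Sup ((\<lambda>ls. infdist (tau_seq \<tau> ls x) A) ` IDX k)" for k x
  have bnd: "infdist (tau_seq \<tau> ls x) A \<le> D" if "ls \<in> IDX k" "x \<in> X" for ls k x
  proof -
    have "tau_seq \<tau> ls x \<in> X" using tau_seq_maps[of L X \<tau> ls x] tau_maps that by (auto simp: IDX_def)
    then have "dist (tau_seq \<tau> ls x) a0 \<le> D" unfolding D_def
      using diameter_bounded_bound[OF bX] a0 A_attr(3) by blast
    then show ?thesis using infdist_le[OF a0] by (meson order_trans)
  qed
  have bdd: "bdd_above ((\<lambda>ls. infdist (tau_seq \<tau> ls x) A) ` IDX k)" if "x \<in> X" for x k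
    unfolding bdd_above_def using bnd that by blast
  have f_ge: "infdist (tau_seq \<tau> ls x) A \<le> f k x" if "ls \<in> IDX k" "x \<in> X" for ls k x
    unfolding f_def using bdd[OF that(2)] that(1) by (auto intro: cSup_upper)
  have f_le: "f k x \<le> c" if "\<And>ls. ls \<in> IDX k \<Longrightarrow> infdist (tau_seq \<tau> ls x) A \<le> c" for k x c
    unfolding f_def using IDXne[of k] that by (auto intro: cSup_least)
  have f0: "f 0 x = infdist x A" for x
  proof -
    have "IDX 0 = {[]}" unfolding IDX_def by auto
    then show ?thesis unfolding f_def by simp
  qed
  have f_nonneg: "0 \<le> f k x" if "x \<in> X" for k x
  proof -
    obtain ls where "ls \<in> IDX k" using IDXne by blast
    then show ?thesis using f_ge[of ls k x] that infdist_nonneg[of "tau_seq \<tau> ls x" A] by linarith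
  qed
  have f_lip: "f k x \<le> f k y + dist x y" if "x \<in> X" "y \<in> X" for k x y
  proof (rule f_le)
    fix ls assume ls: "ls \<in> IDX k"
    have "infdist (tau_seq \<tau> ls x) A \<le> infdist (tau_seq \<tau> ls y) A + dist (tau_seq \<tau> ls x) (tau_seq \<tau> ls y)"
      by (rule infdist_triangle)
    also have "\<dots> \<le> f k y + dist x y"
      using f_ge[OF ls that(2)] tau_seq_lip1[of L X \<tau> ls x y] tau_maps W1 ls that by (auto simp: IDX_def)
    finally show "infdist (tau_seq \<tau> ls x) A \<le> f k y + dist x y" .
  qed
  have f_cont: "continuous_on X (f k)" for k
    unfolding continuous_on_iff
  proof (intro ballI allI impI)
    fix x e assume x: "x \<in> X" and e: "(0::real) < e"
    show "\<exists>d>0. \<forall>x'\<in>X. dist x' x < d \<longrightarrow> dist (f k x') (f k x) < e"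
    proof (intro exI[of _ e] conjI ballI impI)
      fix x' assume "x' \<in> X" "dist x' x < e"
      then show "dist (f k x') (f k x) < e"
        using f_lip[of x' x k] f_lip[of x x' k] x by (auto simp: dist_real_def dist_commute)
    qed (rule e)
  qed
  have f_step: "f k (\<tau> l x) \<le> f (Suc k) x" if "l \<in> L" "x \<in> X" for k l x
  proof (rule f_le)
    fix ls assume "ls \<in> IDX k"
    then have "l # ls \<in> IDX (Suc k)" using that by (auto simp: IDX_def)
    from f_ge[OF this that(2)] show "infdist (tau_seq \<tau> ls (\<tau> l x)) A \<le> f (Suc k) x" by simp
  qed
  have f_M: "f M x \<le> s * infdist x A" if x: "x \<in> X" for x
  proof (rule f_le)
    fix ls assume ls: "ls \<in> IDX M"
    have "infdist (tau_seq \<tau> ls x) A / s \<le> infdist x A"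
    proof (rule infdist_ge[OF A_attr(2)])
      fix a assume a: "a \<in> A"
      have "tau_seq \<tau> ls a \<in> A" using tau_seq_maps[of L A \<tau> ls a] tauA a ls by (auto simp: IDX_def)
      then have "infdist (tau_seq \<tau> ls x) A \<le> dist (tau_seq \<tau> ls x) (tau_seq \<tau> ls a)"
        by (rule infdist_le)
      also have "\<dots> \<le> s * dist x a"
        using CP1(4)[of ls] ls x a A_attr(3) by (auto simp: IDX_def dest: lipschitz_onD)
      finally show "infdist (tau_seq \<tau> ls x) A / s \<le> dist x a"
        using CP1(2) by (simp add: divide_le_eq mult.commute)
    qed
    then show "infdist (tau_seq \<tau> ls x) A \<le> s * infdist x A"
      using CP1(2) by (simp add: divide_le_eq mult.commute)
  qed
  define h where "h x = (\<Sum>k<M. f k x)" for x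
  have h_cont: "continuous_on X h" unfolding h_def by (intro continuous_on_sum f_cont)
  have h_ge: "infdist x A \<le> h x" if "x \<in> X" for x
  proof -
    have "f 0 x \<le> (\<Sum>k<M. f k x)"
      by (rule member_le_sum) (use CP1(1) f_nonneg that in auto)
    then show ?thesis by (simp add: f0 h_def)
  qed
  have key: "h (\<tau> l x) \<le> h x - (1 - s) * infdist x A" if "l \<in> L" "x \<in> X" for l x
  proof -
    have "h (\<tau> l x) \<le> (\<Sum>k<M. f (Suc k) x)"
      unfolding h_def by (rule sum_mono) (use f_step that in auto)
    also have "(\<Sum>k<M. f (Suc k) x) = h x + f M x - f 0 x"
      unfolding h_def using sum.lessThan_Suc_shift[of "\<lambda>k. f k x" M] sum.lessThan_Suc[of "\<lambda>k. f k x" M]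
      by simp
    also have "\<dots> \<le> h x - (1 - s) * infdist x A"
      using f_M[OF that(2)] f0[of x] by (simp add: algebra_simps)
    finally show ?thesis .
  qed
  have G_le: "(\<integral>l. h (\<tau> l x) \<partial>q x) \<le> h x - (1 - s) * infdist x A" if x: "x \<in> X" for x
  proof -
    interpret qx: prob_space "q x" using q_prob[OF x] by (simp add: borel_prob_on_def)
    have cont: "continuous_on L (\<lambda>l. h (\<tau> l x))"
      using continuous_on_compose2[OF h_cont tcl[OF x]] tau_maps x by auto
    have "(\<integral>l. h (\<tau> l x) \<partial>q x) \<le> (\<integral>l. h x - (1 - s) * infdist x A \<partial>q x)"
      apply (rule integral_mono)
        apply (rule bp_int[OF L_cpt(1) q_prob[OF x] cont])
       apply simp
      using key x bp_space[OF q_prob[OF x]] by auto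
    then show ?thesis by (simp add: qx.prob_space)
  qed
  have int_h: "integrable \<mu> h" using bp_int[OF X_cpt(1) mu_inv(1) h_cont] .
  have id_cont: "continuous_on X (\<lambda>x. infdist x A)" by (intro continuous_intros)
  have int_d: "integrable \<mu> (\<lambda>x. infdist x A)" using bp_int[OF X_cpt(1) mu_inv(1) id_cont] .
  have "(\<integral>x. h x \<partial>\<mu>) = (\<integral>x. (\<integral>l. h (\<tau> l x) \<partial>q x) \<partial>\<mu>)"
    using mu_inv(2) h_cont unfolding Tq_fixed_def by blast
  also have "\<dots> \<le> (\<integral>x. h x - (1 - s) * infdist x A \<partial>\<mu>)"
  proof (rule integral_mono_AE')
    show "integrable \<mu> (\<lambda>x. h x - (1 - s) * infdist x A)" using int_h int_d by auto
    show "AE x in \<mu>. (\<integral>l. h (\<tau> l x) \<partial>q x) \<le> h x - (1 - s) * infdist x A"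
      using G_le sp by (auto intro: AE_I2)
    have "0 \<le> h x - (1 - s) * infdist x A" if "x \<in> X" for x
    proof -
      have "0 \<le> s * infdist x A" using CP1(2) infdist_nonneg[of x A] by simp
      then show ?thesis using h_ge[OF that] by (simp add: algebra_simps)
    qed
    then show "AE x in \<mu>. 0 \<le> h x - (1 - s) * infdist x A"
      using sp by (auto intro: AE_I2)
  qed
  also have "\<dots> = (\<integral>x. h x \<partial>\<mu>) - (1 - s) * (\<integral>x. infdist x A \<partial>\<mu>)"
    using int_h int_d by simp
  finally have "(1 - s) * (\<integral>x. infdist x A \<partial>\<mu>) \<le> 0" by simp
  then have "(\<integral>x. infdist x A \<partial>\<mu>) \<le> 0" using CP1(3) by (simp add: mult_le_0_iff)
  moreover have "0 \<le> (\<integral>x. infdist x A \<partial>\<mu>)" by (rule integral_nonneg_AE) (simp add: infdist_nonneg)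
  ultimately have "(\<integral>x. infdist x A \<partial>\<mu>) = 0" by simp
  then show ?thesis
    using bp_pos[OF X_cpt(1) mu_inv(1) id_cont] infdist_nonneg by blast
qed


lemma G_cont:
  fixes X :: "'a::metric_space set" and L :: "'l::metric_space set"
    and \<tau> :: "'l \<Rightarrow> 'a \<Rightarrow> 'a" and q :: "'a \<Rightarrow> 'l measure" and \<phi> :: "'a \<Rightarrow> real"
  assumes L_cpt: "compact L"
    and tau_maps: "\<And>l x. l \<in> L \<Longrightarrow> x \<in> X \<Longrightarrow> \<tau> l x \<in> X"
    and tcl: "\<And>x. x \<in> X \<Longrightarrow> continuous_on L (\<lambda>l. \<tau> l x)"
    and q_prob: "\<And>x. x \<in> X \<Longrightarrow> borel_prob_on L (q x)"
    and q_cont: "\<And>f::'l \<Rightarrow> real. continuous_on L f \<Longrightarrow> continuous_on X (\<lambda>x. \<integral>l. f l \<partial>(q x))"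
    and W1: "\<And>l. l \<in> L \<Longrightarrow> lipschitz_on 1 X (\<tau> l)"
    and phi_cont: "continuous_on X \<phi>"
    and phi_lip: "\<And>x y. x \<in> X \<Longrightarrow> y \<in> X \<Longrightarrow> \<phi> x \<le> \<phi> y + dist x y"
  shows "continuous_on X (\<lambda>x. \<integral>l. \<phi> (\<tau> l x) \<partial>q x)"
  unfolding continuous_on_iff
proof (intro ballI allI impI)
  fix x e assume x: "x \<in> X" and e: "(0::real) < e"
  have pc: "continuous_on L (\<lambda>l. \<phi> (\<tau> l z))" if "z \<in> X" for z
    using continuous_on_compose2[OF phi_cont tcl[OF that]] tau_maps that by auto
  have "continuous_on X (\<lambda>x'. \<integral>l. \<phi> (\<tau> l x) \<partial>(q x'))" using q_cont[OF pc[OF x]] .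
  then obtain d where d: "d > 0" and
    dd: "\<And>x'. x' \<in> X \<Longrightarrow> dist x' x < d \<Longrightarrow>
      dist (\<integral>l. \<phi> (\<tau> l x) \<partial>(q x')) (\<integral>l. \<phi> (\<tau> l x) \<partial>(q x)) < e/2"
    unfolding continuous_on_iff using x e by (metis half_gt_zero)
  have lipc: "\<phi> (\<tau> l z) \<le> \<phi> (\<tau> l z') + dist z z'" if "l \<in> L" "z \<in> X" "z' \<in> X" for l z z'
  proof -
    have "dist (\<tau> l z) (\<tau> l z') \<le> dist z z'" using W1[OF that(1)] that by (auto dest: lipschitz_onD)
    then show ?thesis using phi_lip[of "\<tau> l z" "\<tau> l z'"] tau_maps that by auto
  qed
  have close: "\<bar>(\<integral>l. \<phi> (\<tau> l z) \<partial>q z') - (\<integral>l. \<phi> (\<tau> l z'') \<partial>q z')\<bar> \<le> dist z z''"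
    if "z \<in> X" "z' \<in> X" "z'' \<in> X" for z z' z''
  proof -
    interpret prob_space "q z'" using q_prob[OF that(2)] by (simp add: borel_prob_on_def)
    have sp: "space (q z') = L" using bp_space[OF q_prob[OF that(2)]] .
    have i1: "integrable (q z') (\<lambda>l. \<phi> (\<tau> l z))" using bp_int[OF L_cpt q_prob[OF that(2)] pc[OF that(1)]] .
    have i2: "integrable (q z') (\<lambda>l. \<phi> (\<tau> l z''))" using bp_int[OF L_cpt q_prob[OF that(2)] pc[OF that(3)]] .
    have a: "(\<integral>l. \<phi> (\<tau> l z) \<partial>q z') \<le> (\<integral>l. \<phi> (\<tau> l z'') + dist z z'' \<partial>q z')"
      by (rule integral_mono) (use i1 i2 lipc that sp in auto)
    have b: "(\<integral>l. \<phi> (\<tau> l z'') \<partial>q z') \<le> (\<integral>l. \<phi> (\<tau> l z) + dist z z'' \<partial>q z')"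
      by (rule integral_mono) (use i1 i2 lipc that sp in \<open>auto simp: dist_commute\<close>)
    have c1: "(\<integral>l. \<phi> (\<tau> l z'') + dist z z'' \<partial>q z') = (\<integral>l. \<phi> (\<tau> l z'') \<partial>q z') + dist z z''"
      using i2 by (simp add: prob_space)
    have c2: "(\<integral>l. \<phi> (\<tau> l z) + dist z z'' \<partial>q z') = (\<integral>l. \<phi> (\<tau> l z) \<partial>q z') + dist z z''"
      using i1 by (simp add: prob_space)
    show ?thesis using a b c1 c2 by linarith
  qed
  show "\<exists>d>0. \<forall>x'\<in>X. dist x' x < d \<longrightarrow>
      dist (\<integral>l. \<phi> (\<tau> l x') \<partial>q x') (\<integral>l. \<phi> (\<tau> l x) \<partial>q x) < e"
  proof (intro exI[of _ "min d (e/2)"] conjI ballI impI)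
    show "0 < min d (e/2)" using d e by simp
    fix x' assume x': "x' \<in> X" and dx: "dist x' x < min d (e/2)"
    have 1: "\<bar>(\<integral>l. \<phi> (\<tau> l x') \<partial>q x') - (\<integral>l. \<phi> (\<tau> l x) \<partial>q x')\<bar> \<le> dist x' x"
      using close[OF x' x' x] .
    have 2: "\<bar>(\<integral>l. \<phi> (\<tau> l x) \<partial>q x') - (\<integral>l. \<phi> (\<tau> l x) \<partial>q x)\<bar> < e/2"
      using dd[OF x'] dx by (simp add: dist_real_def)
    show "dist (\<integral>l. \<phi> (\<tau> l x') \<partial>q x') (\<integral>l. \<phi> (\<tau> l x) \<partial>q x) < e"
      using 1 2 dx unfolding dist_real_def by linarith
  qed
qed


theorem mainTheorem13:
  fixes X :: "'a::metric_space set" and L :: "'l::metric_space set"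
    and \<tau> :: "'l \<Rightarrow> 'a \<Rightarrow> 'a" and q :: "'a \<Rightarrow> 'l measure"
    and M :: nat and s r t :: real
    and A :: "'a set" and \<mu> :: "'a measure"
  assumes X_cpt: "compact X" "X \<noteq> {}"
    and L_cpt: "compact L" "L \<noteq> {}"
    and tau_maps: "\<And>l x. l \<in> L \<Longrightarrow> x \<in> X \<Longrightarrow> \<tau> l x \<in> X"
    and tau_cont: "continuous_on (L \<times> X) (\<lambda>(l, x). \<tau> l x)"
    and q_prob: "\<And>x. x \<in> X \<Longrightarrow> borel_prob_on L (q x)"
    and q_cont: "\<And>f::'l \<Rightarrow> real. continuous_on L f \<Longrightarrow> continuous_on X (\<lambda>x. \<integral>l. f l \<partial>(q x))"
    and W1: "\<And>l. l \<in> L \<Longrightarrow> lipschitz_on 1 X (\<tau> l)"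
    and CP1: "M \<ge> 1" "0 < s" "s < 1"
      "\<And>ls. set ls \<subseteq> L \<Longrightarrow> length ls = M \<Longrightarrow> lipschitz_on s X (tau_seq \<tau> ls)"
    and H2: "r \<ge> 0"
      "\<And>l1 l2 x. l1 \<in> L \<Longrightarrow> l2 \<in> L \<Longrightarrow> x \<in> X \<Longrightarrow> dist (\<tau> l1 x) (\<tau> l2 x) \<le> r * dist l1 l2"
    and H3: "t \<ge> 0"
      "\<And>x y. x \<in> X \<Longrightarrow> y \<in> X \<Longrightarrow> dMK L (q x) (q y) \<le> t * dist x y"
    and H4: "\<And>U x. openin (top_of_set L) U \<Longrightarrow> U \<noteq> {} \<Longrightarrow> x \<in> X \<Longrightarrow> measure (q x) U > 0"
    and contr: "s + r * real M * t < 1"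
    and A_attr: "compact A" "A \<noteq> {}" "A \<subseteq> X" "F_R L \<tau> A = A"
    and mu_inv: "borel_prob_on X \<mu>" "Tq_fixed X \<tau> q \<mu>"
  shows "supp_on X \<mu> = A"
proof -
  have sp: "space \<mu> = X" using bp_space[OF mu_inv(1)] .
  interpret prob_space \<mu> using mu_inv(1) by (simp add: borel_prob_on_def)
  have tauA: "\<tau> l a \<in> A" if "l \<in> L" "a \<in> A" for l a
    using A_attr(4) that unfolding F_R_def by blast
  have tcl: "continuous_on L (\<lambda>l. \<tau> l x)" if "x \<in> X" for x
  proof -
    have c1: "continuous_on L (\<lambda>l. (l, x))" by (intro continuous_intros)
    have c2: "(\<lambda>l. (l, x)) ` L \<subseteq> L \<times> X" using that by auto
    show ?thesis using continuous_on_compose2[OF tau_cont c1 c2] by simp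
  qed
  have P1: "measure \<mu> {x\<in>X. infdist x A > 0} = 0"
    by (rule part1[OF X_cpt L_cpt tau_maps tau_cont q_prob W1 CP1 A_attr mu_inv])
  have ballm: "ball c e \<inter> X \<in> sets \<mu>" for c e
  proof -
    have "continuous_on X (\<lambda>x. e - dist x c)" by (intro continuous_intros)
    from bp_sets[OF mu_inv(1) this] have "{x\<in>X. e - dist x c > 0} \<in> sets \<mu>" .
    moreover have "{x\<in>X. e - dist x c > 0} = ball c e \<inter> X" by (auto simp: dist_commute)
    ultimately show ?thesis by simp
  qed
  define S where "S = supp_on X \<mu>"
  have SX: "S \<subseteq> X" unfolding S_def supp_on_def by auto
  have S_sub: "S \<subseteq> A"
  proof
    fix x assume xS: "x \<in> S"
    show "x \<in> A"
    proof (rule ccontr)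
      assume "x \<notin> A"
      then have d: "infdist x A > 0"
        using infdist_pos_not_in_closed[OF compact_imp_closed[OF A_attr(1)] A_attr(2)] by blast
      have pos: "measure \<mu> (ball x (infdist x A) \<inter> X) > 0" using xS d unfolding S_def supp_on_def by blast
      have "ball x (infdist x A) \<inter> X \<subseteq> {y\<in>X. infdist y A > 0}"
      proof
        fix y assume y: "y \<in> ball x (infdist x A) \<inter> X"
        have "infdist x A \<le> infdist y A + dist x y" by (rule infdist_triangle)
        then show "y \<in> {y\<in>X. infdist y A > 0}" using y by auto
      qed
      moreover have "{y\<in>X. infdist y A > 0} \<in> sets \<mu>"
        by (rule bp_sets[OF mu_inv(1)]) (intro continuous_intros)
      ultimately have "measure \<mu> (ball x (infdist x A) \<inter> X) \<le> measure \<mu> {y\<in>X. infdist y A > 0}"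
        by (rule finite_measure_mono)
      then have "measure \<mu> (ball x (infdist x A) \<inter> X) \<le> 0" using P1 by simp
      then show False using pos by simp
    qed
  qed
  have inv_step: "\<tau> l y \<in> S" if yS: "y \<in> S" and l: "l \<in> L" for y l
  proof (rule ccontr)
    assume nS: "\<tau> l y \<notin> S"
    define c where "c = \<tau> l y"
    have y: "y \<in> X" using yS SX by auto
    have cX: "c \<in> X" unfolding c_def using tau_maps l y by simp
    obtain e where e: "e > 0" and m0: "\<not> measure \<mu> (ball c e \<inter> X) > 0"
      using nS cX unfolding S_def supp_on_def c_def by auto
    have m0': "measure \<mu> (ball c e \<inter> X) = 0" using m0 measure_nonneg[of \<mu> "ball c e \<inter> X"] by linarith
    define \<phi> where "\<phi> z = max 0 (e - dist z c)" for z
    have phi_cont: "continuous_on X \<phi>" unfolding \<phi>_def by (intro continuous_intros)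
    have phi_lip: "\<phi> x \<le> \<phi> z + dist x z" for x z
    proof -
      have "dist z c \<le> dist z x + dist x c" by (rule dist_triangle)
      moreover have "dist z x = dist x z" by (rule dist_commute)
      ultimately show ?thesis unfolding \<phi>_def by (simp add: max_def)
    qed
    have phi_nn: "\<phi> z \<ge> 0" for z unfolding \<phi>_def by simp
    have "AE z in \<mu>. \<phi> z = 0"
    proof -
      have eq: "{z\<in>space \<mu>. \<not> \<phi> z = 0} = ball c e \<inter> X"
        using sp by (auto simp: \<phi>_def dist_commute)
      have "emeasure \<mu> (ball c e \<inter> X) = 0" using m0' by (simp add: emeasure_eq_measure)
      then show ?thesis using AE_iff_measurable[OF ballm eq] by simp
    qed
    then have i0: "(\<integral>z. \<phi> z \<partial>\<mu>) = 0" by (rule integral_eq_zero_AE)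
    define G where "G x = (\<integral>l'. \<phi> (\<tau> l' x) \<partial>q x)" for x
    have "(\<integral>z. \<phi> z \<partial>\<mu>) = (\<integral>x. (\<integral>l'. \<phi> (\<tau> l' x) \<partial>q x) \<partial>\<mu>)"
      using mu_inv(2) phi_cont unfolding Tq_fixed_def by (elim allE[of _ \<phi>]) simp
    then have G0: "(\<integral>x. G x \<partial>\<mu>) = 0" using i0 by (simp add: G_def)
    have G_cont': "continuous_on X G"
      unfolding G_def using L_cpt(1) tau_maps tcl q_prob q_cont W1 phi_cont phi_lip by (rule G_cont)
    have G_nn: "G x \<ge> 0" for x unfolding G_def by (rule integral_nonneg_AE) (simp add: phi_nn)
    have mG: "measure \<mu> {x\<in>X. G x > 0} = 0"
      by (rule bp_pos[OF X_cpt(1) mu_inv(1) G_cont' G_nn G0])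
    have Gy: "G y > 0"
    proof (rule ccontr)
      assume "\<not> G y > 0"
      then have "G y = 0" using G_nn[of y] by simp
      have pc: "continuous_on L (\<lambda>l'. \<phi> (\<tau> l' y))"
        using continuous_on_compose2[OF phi_cont tcl[OF y]] tau_maps y by auto
      have "measure (q y) {l'\<in>L. \<phi> (\<tau> l' y) > 0} = 0"
      proof -
        have nn: "\<And>l'. l' \<in> L \<Longrightarrow> 0 \<le> \<phi> (\<tau> l' y)" using phi_nn by simp
        have z: "(\<integral>l'. \<phi> (\<tau> l' y) \<partial>q y) = 0" using \<open>G y = 0\<close> by (simp add: G_def)
        show ?thesis using L_cpt(1) q_prob[OF y] pc nn z by (rule bp_pos)
      qed
      moreover have "openin (top_of_set L) {l'\<in>L. \<phi> (\<tau> l' y) > 0}"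
      proof -
        have "openin (top_of_set L) (L \<inter> (\<lambda>l'. \<phi> (\<tau> l' y)) -` {0<..})"
          by (rule continuous_openin_preimage_gen[OF pc]) simp
        moreover have "L \<inter> (\<lambda>l'. \<phi> (\<tau> l' y)) -` {0<..} = {l'\<in>L. \<phi> (\<tau> l' y) > 0}" by auto
        ultimately show ?thesis by simp
      qed
      moreover have "l \<in> {l'\<in>L. \<phi> (\<tau> l' y) > 0}" using l e unfolding \<phi>_def c_def by simp
      ultimately show False using H4[OF _ _ y, of "{l'\<in>L. \<phi> (\<tau> l' y) > 0}"] by auto
    qed
    have "\<forall>e>0. \<exists>d>0. \<forall>x'\<in>X. dist x' y < d \<longrightarrow> dist (G x') (G y) < e"
      using G_cont' y unfolding continuous_on_iff by blast
    then obtain d where d: "d > 0" and dd: "\<And>x. x \<in> X \<Longrightarrow> dist x y < d \<Longrightarrow> dist (G x) (G y) < G y"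
      using Gy by blast
    have "ball y d \<inter> X \<subseteq> {x\<in>X. G x > 0}"
    proof
      fix x assume x: "x \<in> ball y d \<inter> X"
      then have "dist (G x) (G y) < G y" using dd by (auto simp: dist_commute)
      then show "x \<in> {x\<in>X. G x > 0}" using x by (auto simp: dist_real_def)
    qed
    moreover have "{x\<in>X. G x > 0} \<in> sets \<mu>" by (rule bp_sets[OF mu_inv(1) G_cont'])
    ultimately have "measure \<mu> (ball y d \<inter> X) \<le> measure \<mu> {x\<in>X. G x > 0}" by (rule finite_measure_mono)
    then have "measure \<mu> (ball y d \<inter> X) \<le> 0" using mG by simp
    moreover have "measure \<mu> (ball y d \<inter> X) > 0" using yS d unfolding S_def supp_on_def by blast
    ultimately show False by simp
  qed
  have inv_seq: "set ls \<subseteq> L \<Longrightarrow> x \<in> S \<Longrightarrow> tau_seq \<tau> ls x \<in> S" for ls x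
  proof (induction ls arbitrary: x)
    case Nil then show ?case by simp
  next
    case (Cons l ls)
    then have "\<tau> l x \<in> S" using inv_step by simp
    then show ?case using Cons by simp
  qed
  have S_ne: "S \<noteq> {}"
  proof
    assume S0: "S = {}"
    have "\<forall>x\<in>X. \<exists>e>0. measure \<mu> (ball x e \<inter> X) = 0"
    proof
      fix x assume x: "x \<in> X"
      then obtain e where "e > 0" "\<not> measure \<mu> (ball x e \<inter> X) > 0"
        using S0 unfolding S_def supp_on_def by auto
      then show "\<exists>e>0. measure \<mu> (ball x e \<inter> X) = 0" using measure_nonneg[of \<mu> "ball x e \<inter> X"]
        by (intro exI[of _ e]) linarith
    qed
    then have "\<exists>E. \<forall>x\<in>X. E x > 0 \<and> measure \<mu> (ball x (E x) \<inter> X) = 0" by (rule bchoice)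
    then obtain E where E: "\<And>x. x \<in> X \<Longrightarrow> E x > 0 \<and> measure \<mu> (ball x (E x) \<inter> X) = 0"
      by blast
    have "X \<subseteq> (\<Union>x\<in>X. ball x (E x))"
    proof
      fix x assume "x \<in> X"
      then have "x \<in> ball x (E x)" using E by simp
      then show "x \<in> (\<Union>x\<in>X. ball x (E x))" using \<open>x \<in> X\<close> by blast
    qed
    then obtain C where C: "C \<subseteq> X" "finite C" "X \<subseteq> (\<Union>x\<in>C. ball x (E x))"
      using compactE_image[OF X_cpt(1), of X "\<lambda>x. ball x (E x)"] by blast
    have "X = (\<Union>x\<in>C. ball x (E x) \<inter> X)" using C by auto
    then have "measure \<mu> X \<le> (\<Sum>x\<in>C. measure \<mu> (ball x (E x) \<inter> X))"
      using finite_measure_subadditive_finite[OF C(2), of "\<lambda>x. ball x (E x) \<inter> X"] ballm by auto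
    also have "\<dots> = 0" using E C(1) by (intro sum.neutral) blast
    finally show False using prob_space sp by simp
  qed
  have pre: "a \<in> A \<Longrightarrow> \<exists>ls a'. set ls \<subseteq> L \<and> length ls = k \<and> a' \<in> A \<and> tau_seq \<tau> ls a' = a" for k a
  proof (induction k arbitrary: a)
    case 0 then show ?case by (intro exI[of _ "[]"]) auto
  next
    case (Suc k)
    then obtain ls a'' where h: "set ls \<subseteq> L" "length ls = k" "a'' \<in> A" "tau_seq \<tau> ls a'' = a" by blast
    from h(3) obtain l a' where "l \<in> L" "a' \<in> A" "a'' = \<tau> l a'"
      using A_attr(4) unfolding F_R_def by blast
    then show ?case using h by (intro exI[of _ "l # ls"] exI[of _ a']) auto
  qed
  have contrn: "dist (tau_seq \<tau> ls x) (tau_seq \<tau> ls y) \<le> s ^ n * dist x y"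
    if "set ls \<subseteq> L" "length ls = n * M" "x \<in> X" "y \<in> X" for n ls x y
    using that
  proof (induction n arbitrary: ls x y)
    case 0 then show ?case by simp
  next
    case (Suc n)
    define ls1 where "ls1 = take M ls"
    define ls2 where "ls2 = drop M ls"
    have ls: "ls = ls1 @ ls2" unfolding ls1_def ls2_def by simp
    have l1: "set ls1 \<subseteq> L" "length ls1 = M" using Suc.prems unfolding ls1_def
      by (auto dest!: in_set_takeD)
    have l2: "set ls2 \<subseteq> L" "length ls2 = n * M" using Suc.prems unfolding ls2_def
      by (auto dest!: in_set_dropD)
    have x1: "tau_seq \<tau> ls1 x \<in> X" "tau_seq \<tau> ls1 y \<in> X"
      using tau_seq_maps[of L X \<tau>] tau_maps l1 Suc.prems by auto
    have "dist (tau_seq \<tau> ls x) (tau_seq \<tau> ls y)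
        \<le> s ^ n * dist (tau_seq \<tau> ls1 x) (tau_seq \<tau> ls1 y)"
      unfolding ls tau_seq_append using Suc.IH[OF l2 x1] .
    also have "\<dots> \<le> s ^ n * (s * dist x y)"
    proof (rule mult_left_mono)
      show "dist (tau_seq \<tau> ls1 x) (tau_seq \<tau> ls1 y) \<le> s * dist x y"
        using lipschitz_onD[OF CP1(4)[OF l1] Suc.prems(3,4)] .
      show "0 \<le> s ^ n" using CP1(2) by simp
    qed
    finally show ?case by (simp add: mult.assoc mult.commute mult.left_commute)
  qed
  have A_sub: "A \<subseteq> S"
  proof
    fix a assume a: "a \<in> A"
    have aX: "a \<in> X" using a A_attr(3) by auto
    obtain x0 where x0: "x0 \<in> S" using S_ne by blast
    have x0X: "x0 \<in> X" using x0 SX by auto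
    show "a \<in> S" unfolding S_def supp_on_def
    proof (intro CollectI conjI allI impI aX)
      fix e :: real assume e: "e > 0"
      define D where "D = diameter X"
      have bX: "bounded X" using X_cpt(1) by (rule compact_imp_bounded)
      have D0: "D \<ge> 0" unfolding D_def using diameter_bounded_bound[OF bX aX aX] by simp
      obtain n where n: "s ^ n < e / (D + 1)" using real_arch_pow_inv[of "e / (D+1)" s] e D0 CP1(3) by auto
      obtain ls a' where la: "set ls \<subseteq> L" "length ls = n * M" "a' \<in> A" "tau_seq \<tau> ls a' = a"
        using pre[OF a] by blast
      have a'X: "a' \<in> X" using la(3) A_attr(3) by auto
      define z where "z = tau_seq \<tau> ls x0"
      have zS: "z \<in> S" unfolding z_def using inv_seq[OF la(1) x0] .
      have "dist z a \<le> s ^ n * dist x0 a'"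
        unfolding z_def la(4)[symmetric] using contrn[OF la(1,2) x0X a'X] .
      also have "\<dots> \<le> s ^ n * (D + 1)"
        using diameter_bounded_bound[OF bX x0X a'X] CP1(2) unfolding D_def
        by (intro mult_left_mono) simp_all
      also have "\<dots> < e" using n D0 by (simp add: field_simps)
      finally have dz: "dist z a < e" .
      have "measure \<mu> (ball z (e - dist z a) \<inter> X) > 0"
        using zS dz unfolding S_def supp_on_def by auto
      moreover have "ball z (e - dist z a) \<inter> X \<subseteq> ball a e \<inter> X"
      proof
        fix w assume w: "w \<in> ball z (e - dist z a) \<inter> X"
        have "dist a w \<le> dist a z + dist z w" by (rule dist_triangle)
        then show "w \<in> ball a e \<inter> X" using w by (simp add: dist_commute)
      qed
      ultimately show "measure \<mu> (ball a e \<inter> X) > 0"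
        using finite_measure_mono[OF _ ballm, of "ball z (e - dist z a) \<inter> X" a e] by linarith
    qed
  qed
  show ?thesis using S_sub A_sub unfolding S_def by blast
qed

end
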